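(* Let $G$ be a finite simple graph, let $V_1\subset V(G)$ and $V_2=V(G)\setminus V_1$ with both nonempty, and let $G_1=G(V_1)$, $G_2=G(V_2)$, $V=V(G)$. Let $k$ be a positive integer and assume: (i) $\deg_G(x)\ge k$ for all $x\in V(G)$; (ii) $G_2$ is $k$-edge-connected; (iii) $\max_{x,y\in V}\delta(x,y)\le 2$. If at least one of the following holds: (a) $\Phi\ge k$; (b) $|\partial^1 V_1|\ge k$; (c) $V_1=\partial^1 V_1$; then $G$ is $k$-edge-connected.
   Context: For $A,B\subset V(G)$, $[A,B]$ denotes the set of edges $ab$ of $G$ with $a\in A$, $b\in B$; $[v,A]$ means $[\{v\},A]$. $\deg_G(v)=|[v,V(G)]|$. $G(A)$ is the induced subgraph on $A$. $d_G$ is graph distance and $d_G(v,A)=\min_{w\in A}d_G(v,w)$. A graph is $k$-edge-connected if every edge cut $[S,\bar S]$ ($\emptyset\ne S\subsetneq V$, $\bar S=V\setminus S$) has at least $k$ edges. Contracted distance: for $x,y\in V_1$, $\delta(x,y)=\min\{d_{G_1}(x,y),\, d_G(x,V_2)+d_G(y,V_2)\}$; for $x\in V$ and $y\in V_2$, $\delta(x,y)=\delta(y,x)=d_G(x,V_2)$. For $j\ge1$: $\partial^j V_1=\{x\in V_1: |[x,V_2]|\ge j\}$ and $i^j V_1=\{x\in V_1: |[x,V_2]|<j\}$. $\Phi=\sum_{x\in V_1}\min\{\max\{1,|[x,i^2V_1]|\},\,|[x,V_2]|\}$. *)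

theory Defs
  imports Main "HOL-Library.Extended_Nat"
begin

definition simple_graph :: "'a set \<Rightarrow> ('a \<Rightarrow> 'a \<Rightarrow> bool) \<Rightarrow> bool" where
  "simple_graph V E \<longleftrightarrow> finite V \<and> (\<forall>x y. E x y \<longrightarrow> E y x)
     \<and> (\<forall>x. \<not> E x x) \<and> (\<forall>x y. E x y \<longrightarrow> x \<in> V \<and> y \<in> V)"

definition edges_between :: "('a \<Rightarrow> 'a \<Rightarrow> bool) \<Rightarrow> 'a set \<Rightarrow> 'a set \<Rightarrow> 'a set set" where
  "edges_between E A B = {{a, b} | a b. a \<in> A \<and> b \<in> B \<and> E a b}"

definition degree :: "'a set \<Rightarrow> ('a \<Rightarrow> 'a \<Rightarrow> bool) \<Rightarrow> 'a \<Rightarrow> nat" where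
  "degree V E v = card (edges_between E {v} V)"

definition induced_edges :: "('a \<Rightarrow> 'a \<Rightarrow> bool) \<Rightarrow> 'a set \<Rightarrow> 'a \<Rightarrow> 'a \<Rightarrow> bool" where
  "induced_edges E A = (\<lambda>x y. x \<in> A \<and> y \<in> A \<and> E x y)"

definition k_edge_connected :: "'a set \<Rightarrow> ('a \<Rightarrow> 'a \<Rightarrow> bool) \<Rightarrow> nat \<Rightarrow> bool" where
  "k_edge_connected V E k \<longleftrightarrow>
     (\<forall>S. S \<noteq> {} \<and> S \<subset> V \<longrightarrow> card (edges_between E S (V - S)) \<ge> k)"

text \<open>Walks (as vertex lists) and graph distance (infinite if no walk).\<close>
definition walk :: "'a set \<Rightarrow> ('a \<Rightarrow> 'a \<Rightarrow> bool) \<Rightarrow> 'a list \<Rightarrow> bool" where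
  "walk V E xs \<longleftrightarrow> xs \<noteq> [] \<and> set xs \<subseteq> V \<and>
     (\<forall>i. Suc i < length xs \<longrightarrow> E (xs ! i) (xs ! Suc i))"

definition dist :: "'a set \<Rightarrow> ('a \<Rightarrow> 'a \<Rightarrow> bool) \<Rightarrow> 'a \<Rightarrow> 'a \<Rightarrow> enat" where
  "dist V E x y = Inf {enat (length xs - 1) | xs. walk V E xs \<and> hd xs = x \<and> last xs = y}"

definition dist_set :: "'a set \<Rightarrow> ('a \<Rightarrow> 'a \<Rightarrow> bool) \<Rightarrow> 'a \<Rightarrow> 'a set \<Rightarrow> enat" where
  "dist_set V E x A = (INF w\<in>A. dist V E x w)"

definition cdist :: "'a set \<Rightarrow> ('a \<Rightarrow> 'a \<Rightarrow> bool) \<Rightarrow> 'a set \<Rightarrow> 'a \<Rightarrow> 'a \<Rightarrow> enat" where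
  "cdist V E V1 x y =
    (if x \<in> V1 \<and> y \<in> V1 then
       min (dist V1 (induced_edges E V1) x y)
           (dist_set V E x (V - V1) + dist_set V E y (V - V1))
     else if y \<in> V - V1 then dist_set V E x (V - V1)
     else dist_set V E y (V - V1))"

definition boundary :: "('a \<Rightarrow> 'a \<Rightarrow> bool) \<Rightarrow> 'a set \<Rightarrow> 'a set \<Rightarrow> nat \<Rightarrow> 'a set" where
  "boundary E V1 V2 j = {x \<in> V1. card (edges_between E {x} V2) \<ge> j}"

definition interior :: "('a \<Rightarrow> 'a \<Rightarrow> bool) \<Rightarrow> 'a set \<Rightarrow> 'a set \<Rightarrow> nat \<Rightarrow> 'a set" where
  "interior E V1 V2 j = {x \<in> V1. card (edges_between E {x} V2) < j}"

definition Phi :: "('a \<Rightarrow> 'a \<Rightarrow> bool) \<Rightarrow> 'a set \<Rightarrow> 'a set \<Rightarrow> nat" where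
  "Phi E V1 V2 = (\<Sum>x\<in>V1. min (max 1 (card (edges_between E {x} (interior E V1 V2 2))))
                                 (card (edges_between E {x} V2)))"

end

theory Submission
  imports Defs
begin

definition nb :: "('a \<Rightarrow> 'a \<Rightarrow> bool) \<Rightarrow> 'a \<Rightarrow> 'a set \<Rightarrow> nat" where
  "nb E x A = card {w\<in>A. E x w}"

lemma eb_single: "edges_between E {x} A = (\<lambda>w. {x,w}) ` {w\<in>A. E x w}"
  unfolding edges_between_def by auto

lemma card_eb_single: "card (edges_between E {x} A) = nb E x A"
  unfolding eb_single nb_def by (rule card_image) (auto simp: inj_on_def doubleton_eq_iff)

lemma walk_short:
  assumes "walk V E xs" "length xs \<le> 3"
  shows "hd xs = last xs \<or> E (hd xs) (last xs) \<or> (\<exists>z\<in>V. E (hd xs) z \<and> E z (last xs))"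
proof -
  have ne: "xs \<noteq> []" and st: "set xs \<subseteq> V" and ed: "\<And>i. Suc i < length xs \<Longrightarrow> E (xs ! i) (xs ! Suc i)"
    using assms(1) unfolding walk_def by auto
  have "length xs \<noteq> 0" using ne by simp
  then have "length xs = 1 \<or> length xs = 2 \<or> length xs = 3" using assms(2) by linarith
  moreover {
    assume "length xs = 1" then have ?thesis by (cases xs) auto }
  moreover {
    assume l: "length xs = 2"
    then obtain a b where xs: "xs = [a,b]" by (cases xs; cases "tl xs") auto
    have ?thesis using ed[of 0] xs by auto }
  moreover {
    assume l: "length xs = 3"
    then obtain a b c where xs: "xs = [a,b,c]" by (cases xs; cases "tl xs"; cases "tl (tl xs)") auto
    have ?thesis using ed[of 0] ed[of 1] xs st by auto }
  ultimately show ?thesis by blast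
qed

lemma walk_short2:
  assumes "walk V E xs" "length xs \<le> 2"
  shows "hd xs = last xs \<or> E (hd xs) (last xs)"
proof -
  have ne: "xs \<noteq> []" and ed: "\<And>i. Suc i < length xs \<Longrightarrow> E (xs ! i) (xs ! Suc i)"
    using assms(1) unfolding walk_def by auto
  have "length xs \<noteq> 0" using ne by simp
  then have "length xs = 1 \<or> length xs = 2" using assms(2) by linarith
  moreover {
    assume "length xs = 1" then have ?thesis by (cases xs) auto }
  moreover {
    assume l: "length xs = 2"
    then obtain a b where xs: "xs = [a,b]" by (cases xs; cases "tl xs") auto
    have ?thesis using ed[of 0] xs by auto }
  ultimately show ?thesis by blast
qed

lemma dist_lt:
  assumes "dist V E x y < enat n"
  shows "\<exists>xs. walk V E xs \<and> hd xs = x \<and> last xs = y \<and> length xs \<le> n"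
proof -
  from assms obtain xs where "walk V E xs" "hd xs = x" "last xs = y" "enat (length xs - 1) < enat n"
    unfolding dist_def Inf_less_iff by auto
  moreover then have "xs \<noteq> []" unfolding walk_def by auto
  ultimately show ?thesis by (intro exI[of _ xs]) auto
qed

lemma dist_lt3: "dist V E x y < 3 \<Longrightarrow> x = y \<or> E x y \<or> (\<exists>z\<in>V. E x z \<and> E z y)"
  using dist_lt[of V E x y 3] walk_short by (fastforce simp: numeral_eq_enat)

lemma dist_lt2: "dist V E x y < 2 \<Longrightarrow> x = y \<or> E x y"
  using dist_lt[of V E x y 2] walk_short2 by (fastforce simp: numeral_eq_enat)

lemma dist_lt1: "dist V E x y < 1 \<Longrightarrow> x = y"
proof -
  assume "dist V E x y < 1"
  then obtain xs where "walk V E xs" "hd xs = x" "last xs = y" "length xs \<le> 1"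
    using dist_lt[of V E x y 1] by (auto simp: one_enat_def)
  then show ?thesis unfolding walk_def by (cases xs) auto
qed

lemma ds_lt: "dist_set V E x A < c \<Longrightarrow> \<exists>w\<in>A. dist V E x w < c"
  unfolding dist_set_def by (simp add: INF_less_iff)

lemma cut_formula:
  assumes G: "simple_graph V E" and S: "S \<subseteq> V1" and V1: "V1 \<subseteq> V"
  shows "card (edges_between E S (V - S)) = (\<Sum>a\<in>S. nb E a (V - S))"
    and "card (edges_between E S (V - S)) = (\<Sum>a\<in>S. nb E a (V - V1)) + (\<Sum>b\<in>V1 - S. nb E b S)"
proof -
  have fin: "finite V" and sym: "\<And>x y. E x y \<Longrightarrow> E y x" using G unfolding simple_graph_def by auto
  define P where "P = {(a,b). a\<in>S \<and> b \<in> V - S \<and> E a b}"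
  have eq: "edges_between E S (V - S) = (\<lambda>(a,b). {a,b}) ` P"
    unfolding edges_between_def P_def by auto
  have inj: "inj_on (\<lambda>(a,b). {a,b}) P"
  proof (rule inj_onI)
    fix p q assume "p \<in> P" "q \<in> P" "(\<lambda>(a,b). {a,b}) p = (\<lambda>(a,b). {a,b}) q"
    then obtain a b c d where p: "p = (a,b)" "q = (c,d)" "a \<in> S" "b \<notin> S" "c \<in> S" "d \<notin> S" "{a,b} = {c,d}"
      unfolding P_def by auto
    then show "p = q" by (metis doubleton_eq_iff)
  qed
  have cP: "card (edges_between E S (V - S)) = card P"
    unfolding eq by (rule card_image[OF inj])
  have finV1: "finite V1" using V1 fin by (rule finite_subset)
  have finS: "finite S" using S finV1 by (rule finite_subset)
  have "P = Sigma S (\<lambda>a. {b\<in>V-S. E a b})" unfolding P_def by auto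
  then have "card P = (\<Sum>a\<in>S. nb E a (V - S))"
    using finS fin by (simp add: card_SigmaI nb_def)
  then show "card (edges_between E S (V - S)) = (\<Sum>a\<in>S. nb E a (V - S))" using cP by simp
  define P1 where "P1 = Sigma S (\<lambda>a. {b\<in>V-V1. E a b})"
  define Q where "Q = Sigma (V1 - S) (\<lambda>b. {a\<in>S. E b a})"
  have PU: "P = P1 \<union> (\<lambda>(b,a). (a,b)) ` Q"
  proof (rule set_eqI)
    fix p show "p \<in> P \<longleftrightarrow> p \<in> P1 \<union> (\<lambda>(b,a). (a,b)) ` Q"
    proof (cases p)
      case (Pair a b)
      have "(a,b) \<in> (\<lambda>(b,a). (a,b)) ` Q \<longleftrightarrow> (b,a) \<in> Q" by force
      then show ?thesis unfolding Pair P_def P1_def Q_def using S V1 sym by blast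
    qed
  qed
  have "card P1 = (\<Sum>a\<in>S. nb E a (V - V1))"
    unfolding P1_def using finS fin by (simp add: card_SigmaI nb_def)
  moreover have "card ((\<lambda>(b,a). (a,b)) ` Q) = card Q"
    by (rule card_image) (auto simp: inj_on_def)
  moreover have "card Q = (\<Sum>b\<in>V1 - S. nb E b S)"
    unfolding Q_def using finS finV1 by (simp add: card_SigmaI nb_def)
  moreover have "finite P1" unfolding P1_def using finS fin by auto
  moreover have "finite Q" unfolding Q_def using finS finV1 by auto
  moreover have "P1 \<inter> (\<lambda>(b,a). (a,b)) ` Q = {}" unfolding P1_def Q_def by auto
  ultimately have "card P = (\<Sum>a\<in>S. nb E a (V - V1)) + (\<Sum>b\<in>V1 - S. nb E b S)"
    unfolding PU by (simp add: card_Un_disjoint)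
  then show "card (edges_between E S (V - S)) = (\<Sum>a\<in>S. nb E a (V - V1)) + (\<Sum>b\<in>V1 - S. nb E b S)"
    using cP by simp
qed

lemma nb_Un: "finite A \<Longrightarrow> finite B \<Longrightarrow> A \<inter> B = {} \<Longrightarrow> nb E x (A \<union> B) = nb E x A + nb E x B"
proof -
  assume "finite A" "finite B" "A \<inter> B = {}"
  moreover have "{w\<in>A \<union> B. E x w} = {w\<in>A. E x w} \<union> {w\<in>B. E x w}" by auto
  ultimately show ?thesis unfolding nb_def by (simp add: card_Un_disjoint disjoint_iff)
qed

lemma nb_mono: "finite B \<Longrightarrow> A \<subseteq> B \<Longrightarrow> nb E x A \<le> nb E x B"
  unfolding nb_def by (rule card_mono) auto

lemma nb_pos: "finite A \<Longrightarrow> (nb E x A \<ge> 1) = (\<exists>w\<in>A. E x w)"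
  unfolding nb_def by (auto simp: Suc_le_eq card_gt_0_iff)

lemma arith1: "1 \<le> (s::nat) \<Longrightarrow> s \<le> k \<Longrightarrow> k \<le> s * (k + 1 - s)"
proof -
  assume "1 \<le> s" "s \<le> k"
  then obtain t where k: "k = s + t" using le_Suc_ex by blast
  have "s * t \<ge> t" using \<open>1 \<le> s\<close> by simp
  then show ?thesis unfolding k by (simp add: algebra_simps)
qed

lemma enat_le2: "(x::enat) \<le> 2 \<Longrightarrow> x < 3"
  by (cases x) (auto simp: numeral_eq_enat)

lemma main_cut:
  assumes G: "simple_graph V E"
    and V1: "V1 \<subseteq> V" "V - V1 \<noteq> {}"
    and deg: "\<forall>x\<in>V. degree V E x \<ge> k"
    and diam: "\<forall>x\<in>V. \<forall>y\<in>V. cdist V E V1 x y \<le> 2"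
    and cases: "Phi E V1 (V - V1) \<ge> k \<or> card (boundary E V1 (V - V1) 1) \<ge> k
                \<or> V1 = boundary E V1 (V - V1) 1"
    and S: "S \<subseteq> V1" "S \<noteq> {}"
  shows "k \<le> card (edges_between E S (V - S))"
proof (rule ccontr)
  define V2 where "V2 = V - V1"
  define T where "T = V1 - S"
  define cut where "cut = card (edges_between E S (V - S))"
  assume "\<not> k \<le> card (edges_between E S (V - S))"
  then have cutk: "cut < k" unfolding cut_def by simp
  have fin: "finite V" and sym: "\<And>x y. E x y \<Longrightarrow> E y x" and irr: "\<And>x. \<not> E x x"
    and inV: "\<And>x y. E x y \<Longrightarrow> x \<in> V \<and> y \<in> V"
    using G unfolding simple_graph_def by auto
  have finS: "finite S" "finite T" "finite V2" "finite V1"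
    using fin S V1 finite_subset[of S V] finite_subset[of V1 V] unfolding T_def V2_def by auto
  have deg': "\<And>x. x \<in> V \<Longrightarrow> k \<le> nb E x V" using deg card_eb_single unfolding degree_def by metis
  have cut1: "cut = (\<Sum>a\<in>S. nb E a (V - S))" and cut2: "cut = (\<Sum>a\<in>S. nb E a V2) + (\<Sum>b\<in>T. nb E b S)"
    using cut_formula[OF G S(1) V1(1)] unfolding cut_def V2_def T_def by auto
  have VS: "V = S \<union> (V - S)" "S \<inter> (V - S) = {}" using S V1 by auto
  have perv: "nb E x (V - S) \<ge> k + 1 - card S" if x: "x \<in> S" for x
  proof -
    have a: "k \<le> nb E x V" using deg' x S V1 by auto
    have b: "nb E x V = nb E x S + nb E x (V - S)"
      using nb_Un[of S "V - S" E x] VS finS fin by simp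
    have c: "nb E x S \<le> card S - 1"
    proof -
      have "nb E x S \<le> card (S - {x})" unfolding nb_def
        by (rule card_mono) (use finS irr in auto)
      then show ?thesis using x finS by simp
    qed
    have "card S \<ge> 1" using x finS by (simp add: Suc_le_eq card_gt_0_iff) blast
    then show ?thesis using a b c by linarith
  qed
  have "card S > k"
  proof (rule ccontr)
    assume "\<not> card S > k"
    then have sk: "card S \<le> k" by simp
    have s1: "1 \<le> card S" using S finS by (simp add: Suc_le_eq card_gt_0_iff)
    have "(\<Sum>a\<in>S. k + 1 - card S) \<le> cut" unfolding cut1 by (rule sum_mono) (rule perv)
    then have "card S * (k + 1 - card S) \<le> cut" by simp
    then show False using arith1[OF s1 sk] cutk by linarith
  qed
  then obtain x0 where x0: "x0 \<in> S" "nb E x0 (V - S) = 0"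
  proof -
    assume h: "\<And>x0. x0 \<in> S \<Longrightarrow> nb E x0 (V - S) = 0 \<Longrightarrow> thesis"
    show thesis
    proof (rule ccontr)
      assume "\<not> thesis"
      then have "\<forall>x\<in>S. 1 \<le> nb E x (V - S)" using h by fastforce
      then have "(\<Sum>a\<in>S. (1::nat)) \<le> cut" unfolding cut1 by (intro sum_mono) auto
      then show False using \<open>card S > k\<close> cutk by simp
    qed
  qed
  have x0n: "\<And>w. E x0 w \<Longrightarrow> w \<in> S"
  proof -
    fix w assume "E x0 w"
    then have "w \<in> V" using inV by auto
    show "w \<in> S"
    proof (rule ccontr)
      assume "w \<notin> S"
      then have "1 \<le> nb E x0 (V - S)" using nb_pos[of "V - S" E x0] fin \<open>E x0 w\<close> \<open>w \<in> V\<close> by auto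
      then show False using x0 by simp
    qed
  qed
  have x0V1: "x0 \<in> V1" "x0 \<in> V" using x0 S V1 by auto
  have SV2: "1 \<le> (\<Sum>a\<in>S. nb E a V2)"
  proof -
    obtain w2 where w2: "w2 \<in> V2" using V1 unfolding V2_def by auto
    have "cdist V E V1 x0 w2 \<le> 2" using diam x0V1 w2 unfolding V2_def by auto
    then have "dist_set V E x0 V2 \<le> 2" using w2 x0V1 unfolding cdist_def V2_def
      by auto
    then have "dist_set V E x0 V2 < 3" by (rule enat_le2)
    from ds_lt[OF this] obtain w where w: "w \<in> V2" "dist V E x0 w < 3" by blast
    from dist_lt3[OF w(2)] have "x0 = w \<or> E x0 w \<or> (\<exists>z\<in>V. E x0 z \<and> E z w)" .
    moreover have "x0 \<noteq> w" using w x0V1 unfolding V2_def by auto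
    moreover have "\<not> E x0 w" using x0n w S unfolding V2_def by auto
    ultimately obtain z where z: "E x0 z" "E z w" by auto
    have "z \<in> S" using x0n z by auto
    have "1 \<le> nb E z V2" using nb_pos[of V2 E z] finS z w by auto
    also have "nb E z V2 \<le> (\<Sum>a\<in>S. nb E a V2)"
      using \<open>z \<in> S\<close> finS by (intro member_le_sum) auto
    finally show ?thesis .
  qed
  have Tn: "1 \<le> nb E v S" if v: "v \<in> T" for v
  proof -
    have vV: "v \<in> V1" "v \<in> V" "v \<notin> S" using v V1 unfolding T_def by auto
    have c: "cdist V E V1 x0 v \<le> 2" using diam x0V1 vV by auto
    have "\<exists>z. E x0 z \<and> E z v"
    proof (cases "dist V1 (induced_edges E V1) x0 v < 3")
      case True
      from dist_lt3[OF True] have "x0 = v \<or> induced_edges E V1 x0 v \<or> (\<exists>z\<in>V1. induced_edges E V1 x0 z \<and> induced_edges E V1 z v)"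
        .
      moreover have "x0 \<noteq> v" using x0 vV by auto
      moreover have "\<not> E x0 v" using x0n vV by auto
      ultimately show ?thesis unfolding induced_edges_def by auto
    next
      case False
      then have "\<not> dist V1 (induced_edges E V1) x0 v \<le> 2"
        using enat_le2 by blast
      then have s: "dist_set V E x0 (V - V1) + dist_set V E v (V - V1) \<le> 2"
        using c x0V1 vV unfolding cdist_def by (auto simp: min_le_iff_disj)
      have a: "\<not> dist_set V E x0 (V - V1) < 2"
      proof
        assume "dist_set V E x0 (V - V1) < 2"
        from ds_lt[OF this] obtain w where w: "w \<in> V - V1" "dist V E x0 w < 2" by blast
        from dist_lt2[OF w(2)] have "x0 = w \<or> E x0 w" .
        then show False using w x0V1 x0n S by blast
      qed
      have b: "\<not> dist_set V E v (V - V1) < 1"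
      proof
        assume "dist_set V E v (V - V1) < 1"
        from ds_lt[OF this] obtain w where w: "w \<in> V - V1" "dist V E v w < 1" by blast
        from dist_lt1[OF w(2)] have "v = w" .
        then show False using w vV by blast
      qed
      have "(2::enat) + 1 \<le> dist_set V E x0 (V - V1) + dist_set V E v (V - V1)"
        using a b by (intro add_mono) auto
      then have "(2::enat) + 1 \<le> 2" using s by (rule order_trans)
      then show ?thesis by (simp add: numeral_eq_enat one_enat_def)
    qed
    then obtain z where "E x0 z" "E z v" by auto
    then have "z \<in> S" "E v z" using x0n sym by auto
    then show ?thesis using nb_pos[of S E v] finS by auto
  qed
  have bd: "boundary E V1 V2 1 = {x\<in>V1. 1 \<le> nb E x V2}"
    unfolding boundary_def card_eb_single by simp
  have nb0: "\<not> 1 \<le> nb E x0 V2" using nb_pos[of V2 E x0] finS x0n S unfolding V2_def by auto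
  from cases show False
  proof (elim disjE)
    assume "V1 = boundary E V1 (V - V1) 1"
    then show False using x0V1 nb0 bd unfolding V2_def by auto
  next
    assume kb: "card (boundary E V1 (V - V1) 1) \<ge> k"
    let ?B = "boundary E V1 V2 1"
    have "?B \<subseteq> (S \<inter> ?B) \<union> T" unfolding T_def bd by auto
    then have "card ?B \<le> card (S \<inter> ?B) + card T"
      by (meson card_Un_le card_mono finS(2) finite_Int finS(1) finite_UnI order_trans)
    moreover have "card (S \<inter> ?B) \<le> (\<Sum>a\<in>S. nb E a V2)"
    proof -
      have "card (S \<inter> ?B) = (\<Sum>a\<in>S \<inter> ?B. 1)" by simp
      also have "\<dots> \<le> (\<Sum>a\<in>S \<inter> ?B. nb E a V2)" using bd by (intro sum_mono) blast
      also have "\<dots> \<le> (\<Sum>a\<in>S. nb E a V2)" using finS by (intro sum_mono2) auto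
      finally show ?thesis .
    qed
    moreover have "card T \<le> (\<Sum>b\<in>T. nb E b S)"
      using sum_mono[of T "\<lambda>_. 1" "\<lambda>b. nb E b S"] Tn by simp
    ultimately show False using kb cutk cut2 unfolding V2_def by linarith
  next
    assume kP: "Phi E V1 (V - V1) \<ge> k"
    show False
    proof (cases "\<exists>u\<in>T. nb E u V2 \<le> 1")
      case True
      then obtain u where u: "u \<in> T" "nb E u V2 \<le> 1" by auto
      have uV: "u \<in> V" using u V1 unfolding T_def by auto
      have dec: "V = S \<union> T \<union> V2" using S V1 unfolding T_def V2_def by auto
      have d1: "S \<inter> T = {}" "(S \<union> T) \<inter> V2 = {}" unfolding T_def V2_def using S V1 by auto
      have e1: "nb E u (S \<union> T \<union> V2) = nb E u (S \<union> T) + nb E u V2"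
        by (rule nb_Un) (use finS d1 in auto)
      have e2: "nb E u (S \<union> T) = nb E u S + nb E u T"
        by (rule nb_Un) (use finS d1 in auto)
      have "nb E u V = nb E u S + nb E u T + nb E u V2"
        using e1 e2 dec by simp
      moreover have "nb E u T \<le> card T - 1"
      proof -
        have "nb E u T \<le> card (T - {u})" unfolding nb_def
          by (rule card_mono) (use finS irr in auto)
        then show ?thesis using u finS by simp
      qed
      moreover have "(\<Sum>b\<in>T. nb E b S) = nb E u S + (\<Sum>b\<in>T - {u}. nb E b S)"
        using u finS by (simp add: sum.remove)
      moreover have "card (T - {u}) \<le> (\<Sum>b\<in>T - {u}. nb E b S)"
        using sum_mono[of "T - {u}" "\<lambda>_. 1" "\<lambda>b. nb E b S"] Tn by simp
      moreover have "card (T - {u}) = card T - 1" using u finS by simp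
      moreover have "k \<le> nb E u V" using deg' uV by auto
      ultimately show False using cut2 cutk SV2 u by linarith
    next
      case False
      let ?I = "interior E V1 (V - V1) 2"
      have IS: "?I \<subseteq> S" using False unfolding interior_def card_eb_single T_def V2_def by force
      have "Phi E V1 (V - V1) \<le> cut"
      proof -
        let ?f = "\<lambda>x. min (max 1 (card (edges_between E {x} ?I))) (card (edges_between E {x} V2))"
        have P: "Phi E V1 (V - V1) = (\<Sum>x\<in>S. ?f x) + (\<Sum>x\<in>T. ?f x)"
        proof -
          have "V1 = S \<union> T" "S \<inter> T = {}" using S unfolding T_def by auto
          then show ?thesis unfolding Phi_def V2_def using finS by (simp add: sum.union_disjoint)
        qed
        have "(\<Sum>x\<in>S. ?f x) \<le> (\<Sum>a\<in>S. nb E a V2)"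
          by (intro sum_mono) (simp add: card_eb_single)
        moreover have "(\<Sum>x\<in>T. ?f x) \<le> (\<Sum>b\<in>T. nb E b S)"
        proof (intro sum_mono)
          fix x assume x: "x \<in> T"
          have "nb E x ?I \<le> nb E x S" using IS finS by (intro nb_mono) auto
          then have "max 1 (nb E x ?I) \<le> nb E x S" using Tn[OF x] by simp
          then show "?f x \<le> nb E x S" by (simp add: card_eb_single min_le_iff_disj)
        qed
        ultimately show ?thesis using P cut2 by linarith
      qed
      then show False using kP cutk by linarith
    qed
  qed
qed

lemma eb_sym: "(\<And>x y. E x y \<Longrightarrow> E y x) \<Longrightarrow> edges_between E A B = edges_between E B A"
proof -
  assume sym: "\<And>x y. E x y \<Longrightarrow> E y x"
  have "edges_between E A B \<subseteq> edges_between E B A" for A B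
  proof
    fix e assume "e \<in> edges_between E A B"
    then obtain a b where "e = {a,b}" "a \<in> A" "b \<in> B" "E a b" unfolding edges_between_def by blast
    moreover have "{a,b} = {b,a}" by (rule insert_commute)
    ultimately show "e \<in> edges_between E B A" unfolding edges_between_def using sym by blast
  qed
  then show ?thesis by blast
qed

lemma eb_swap: "simple_graph V E \<Longrightarrow> S \<subseteq> V \<Longrightarrow> edges_between E (V - S) (V - (V - S)) = edges_between E S (V - S)"
proof -
  assume G: "simple_graph V E" "S \<subseteq> V"
  then have "V - (V - S) = S" by blast
  then show ?thesis using eb_sym[of E "V - S" S] G(1) unfolding simple_graph_def by simp
qed

theorem corollary1:
  fixes V V1 :: "'a set" and E :: "'a \<Rightarrow> 'a \<Rightarrow> bool" and k :: nat
  assumes G: "simple_graph V E"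
    and V1: "V1 \<subseteq> V" "V1 \<noteq> {}" "V - V1 \<noteq> {}"
    and k: "k > 0"
    and deg: "\<forall>x\<in>V. degree V E x \<ge> k"
    and conn2: "k_edge_connected (V - V1) (induced_edges E (V - V1)) k"
    and diam: "\<forall>x\<in>V. \<forall>y\<in>V. cdist V E V1 x y \<le> 2"
    and cases: "Phi E V1 (V - V1) \<ge> k \<or> card (boundary E V1 (V - V1) 1) \<ge> k
                \<or> V1 = boundary E V1 (V - V1) 1"
  shows "k_edge_connected V E k"
  unfolding k_edge_connected_def
proof (intro allI impI)
  fix S assume S: "S \<noteq> {} \<and> S \<subset> V"
  have fin: "finite V" using G unfolding simple_graph_def by auto
  have finE: "finite (edges_between E S (V - S))"
  proof (rule finite_subset)
    show "edges_between E S (V - S) \<subseteq> Pow V" using S unfolding edges_between_def by auto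
    show "finite (Pow V)" using fin by simp
  qed
  define V2 where "V2 = V - V1"
  show "k \<le> card (edges_between E S (V - S))"
  proof (cases "S \<inter> V2 \<noteq> {} \<and> V2 - S \<noteq> {}")
    case True
    let ?S' = "S \<inter> V2"
    have conn2': "k_edge_connected V2 (induced_edges E V2) k" using conn2 by (simp add: V2_def)
    have sub: "?S' \<noteq> {} \<and> ?S' \<subset> V2" using True by blast
    have "k \<le> card (edges_between (induced_edges E V2) ?S' (V2 - ?S'))"
      using conn2'[unfolded k_edge_connected_def, rule_format, OF sub] .
    also have "\<dots> \<le> card (edges_between E S (V - S))"
    proof (rule card_mono[OF finE])
      show "edges_between (induced_edges E V2) ?S' (V2 - ?S') \<subseteq> edges_between E S (V - S)"
      proof
        fix e assume "e \<in> edges_between (induced_edges E V2) ?S' (V2 - ?S')"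
        then obtain a b where ab: "e = {a,b}" "a \<in> S" "b \<in> V2" "b \<notin> S" "E a b"
          unfolding edges_between_def induced_edges_def by blast
        have "b \<in> V - S" using ab(3,4) unfolding V2_def by blast
        then show "e \<in> edges_between E S (V - S)" unfolding edges_between_def using ab by blast
      qed
    qed
    finally show ?thesis .
  next
    case False
    then have "S \<inter> V2 = {} \<or> V2 - S = {}" by blast
    then show ?thesis
    proof (elim disjE)
      assume "S \<inter> V2 = {}"
      then have "S \<subseteq> V1" using S unfolding V2_def by auto
      then show ?thesis using main_cut[OF G V1(1) V1(3) deg diam cases] S by auto
    next
      assume "V2 - S = {}"
      then have s: "V - S \<subseteq> V1" "V - S \<noteq> {}" using S unfolding V2_def by auto
      have "k \<le> card (edges_between E (V - S) (V - (V - S)))"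
        using main_cut[OF G V1(1) V1(3) deg diam cases s] .
      then show ?thesis using eb_swap[OF G] S by auto
    qed
  qed
qed

end
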